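(* Let $n=(2k+1)^2$ be an odd square ($k\geq 0$ an integer). (i) There exists a graph $H_1$ of order $n$ such that $\chi_{\mathrm{so}}(H_1)=\sqrt{n}$ and $\chi_{\mathrm{so}}(\overline{H_1})=\sqrt{n}$. (ii) There exists a graph $H_2$ of order $n$ such that $\chi_{\mathrm{so}}(H_2)=n$ and $\chi_{\mathrm{so}}(\overline{H_2})=n$. (iii) For every graph $G$ on $n$ vertices, $2\sqrt{n}\leq \chi_{\mathrm{so}}(G)+\chi_{\mathrm{so}}(\overline{G})\leq 2n$ and $n\leq \chi_{\mathrm{so}}(G)\cdot\chi_{\mathrm{so}}(\overline{G})\leq n^2$, and all four of these inequalities are attained with equality by some graph on $n$ vertices.
   Context: All graphs are finite, simple and undirected; $\overline{G}$ denotes the complement of $G$. A strong odd coloring of a graph $G$ is a proper vertex coloring of $G$ such that for every non-isolated vertex $v$ and every color $c$, either no vertex of the open neighborhood $N_G(v)$ has color $c$, or color $c$ is used on an odd number of vertices of $N_G(v)$; $\chi_{\mathrm{so}}(G)$ is the minimum number of colors in such a coloring. *)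

theory Defs
  imports Main
begin

definition simple_graph :: "'a set \<Rightarrow> ('a \<Rightarrow> 'a \<Rightarrow> bool) \<Rightarrow> bool" where
  "simple_graph V E \<longleftrightarrow> finite V \<and>
     (\<forall>u v. E u v \<longrightarrow> u \<in> V \<and> v \<in> V) \<and>
     (\<forall>u v. E u v \<longrightarrow> E v u) \<and>
     (\<forall>v. \<not> E v v)"

definition graph_compl :: "'a set \<Rightarrow> ('a \<Rightarrow> 'a \<Rightarrow> bool) \<Rightarrow> ('a \<Rightarrow> 'a \<Rightarrow> bool)" where
  "graph_compl V E = (\<lambda>u v. u \<in> V \<and> v \<in> V \<and> u \<noteq> v \<and> \<not> E u v)"

definition nbhd :: "'a set \<Rightarrow> ('a \<Rightarrow> 'a \<Rightarrow> bool) \<Rightarrow> 'a \<Rightarrow> 'a set" where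
  "nbhd V E v = {u \<in> V. E v u}"

definition strong_odd_coloring :: "'a set \<Rightarrow> ('a \<Rightarrow> 'a \<Rightarrow> bool) \<Rightarrow> ('a \<Rightarrow> nat) \<Rightarrow> bool" where
  "strong_odd_coloring V E col \<longleftrightarrow>
     (\<forall>u\<in>V. \<forall>v\<in>V. E u v \<longrightarrow> col u \<noteq> col v) \<and>
     (\<forall>v\<in>V. nbhd V E v \<noteq> {} \<longrightarrow>
        (\<forall>c. {u \<in> nbhd V E v. col u = c} = {} \<or> odd (card {u \<in> nbhd V E v. col u = c})))"

definition chi_so :: "'a set \<Rightarrow> ('a \<Rightarrow> 'a \<Rightarrow> bool) \<Rightarrow> nat" where
  "chi_so V E = (LEAST m. \<exists>col. strong_odd_coloring V E col \<and> card (col ` V) = m)"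

end

theory Submission
  imports Defs
begin

lemma inj_soc:
  assumes "inj_on f V" "\<forall>v. \<not> E v v"
  shows "strong_odd_coloring V E f"
  unfolding strong_odd_coloring_def
proof (intro conjI ballI impI allI)
  fix u v assume "u \<in> V" "v \<in> V" "E u v"
  then have "u \<noteq> v" using assms(2) by blast
  then show "f u \<noteq> f v" using assms(1) \<open>u \<in> V\<close> \<open>v \<in> V\<close> inj_on_eq_iff by fastforce
next
  fix v c assume "v \<in> V" "nbhd V E v \<noteq> {}"
  show "{u \<in> nbhd V E v. f u = c} = {} \<or> odd (card {u \<in> nbhd V E v. f u = c})"
  proof (cases "{u \<in> nbhd V E v. f u = c} = {}")
    case False
    then obtain x where x: "x \<in> nbhd V E v" "f x = c" by blast
    have "{u \<in> nbhd V E v. f u = c} = {x}"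
      using x assms(1) by (auto simp: nbhd_def inj_on_def)
    then show ?thesis by simp
  qed simp
qed

lemma chi_so_le:
  assumes "strong_odd_coloring V E col"
  shows "chi_so V E \<le> card (col ` V)"
  unfolding chi_so_def by (rule Least_le) (use assms in blast)

lemma chi_so_attained:
  assumes "finite V" "\<forall>v. \<not> E v v"
  shows "\<exists>col. strong_odd_coloring V E col \<and> card (col ` V) = chi_so V E"
    and "chi_so V E \<le> card V"
proof -
  obtain f :: "'a \<Rightarrow> nat" and N where f: "f ` V = {i. i < N}" "inj_on f V"
    using finite_imp_inj_to_nat_seg[OF assms(1)] by blast
  have s: "strong_odd_coloring V E f" by (rule inj_soc[of f V E, OF f(2) assms(2)])
  have c: "card (f ` V) = card V" using card_image[OF f(2)] .
  have ex: "\<exists>col. strong_odd_coloring V E col \<and> card (col ` V) = card V"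
    using s c by blast
  show "\<exists>col. strong_odd_coloring V E col \<and> card (col ` V) = chi_so V E"
    unfolding chi_so_def by (rule LeastI_ex) (use ex in blast)
  show "chi_so V E \<le> card V" using chi_so_le[OF s] c by simp
qed

lemma compl_irrefl: "\<forall>v. \<not> graph_compl V E v v"
  by (simp add: graph_compl_def)

lemma product_lb:
  assumes "finite V" "\<forall>v. \<not> E v v"
  shows "card V \<le> chi_so V E * chi_so V (graph_compl V E)"
proof -
  obtain c1 where c1: "strong_odd_coloring V E c1" "card (c1 ` V) = chi_so V E"
    using chi_so_attained(1)[of V E, OF assms] by blast
  obtain c2 where c2: "strong_odd_coloring V (graph_compl V E) c2"
      "card (c2 ` V) = chi_so V (graph_compl V E)"
    using chi_so_attained(1)[of V "graph_compl V E", OF assms(1) compl_irrefl] by blast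
  have inj: "inj_on (\<lambda>v. (c1 v, c2 v)) V"
  proof (rule inj_onI)
    fix u v assume uv: "u \<in> V" "v \<in> V" "(c1 u, c2 u) = (c1 v, c2 v)"
    show "u = v"
    proof (rule ccontr)
      assume "u \<noteq> v"
      show False
      proof (cases "E u v")
        case True
        then show False using c1(1) uv unfolding strong_odd_coloring_def by auto
      next
        case False
        then have "graph_compl V E u v" using uv \<open>u \<noteq> v\<close> by (simp add: graph_compl_def)
        then show False using c2(1) uv unfolding strong_odd_coloring_def by auto
      qed
    qed
  qed
  have "card V = card ((\<lambda>v. (c1 v, c2 v)) ` V)" using card_image[OF inj] by simp
  also have "\<dots> \<le> card (c1 ` V \<times> c2 ` V)"
    by (rule card_mono) (use assms(1) in auto)
  also have "\<dots> = chi_so V E * chi_so V (graph_compl V E)"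
    by (simp add: card_cartesian_product c1 c2)
  finally show ?thesis .
qed

lemma chi_so_inj:
  assumes "finite V" "\<forall>v. \<not> E v v" "\<forall>col. strong_odd_coloring V E col \<longrightarrow> inj_on col V"
  shows "chi_so V E = card V"
proof -
  obtain c where "strong_odd_coloring V E c" "card (c ` V) = chi_so V E"
    using chi_so_attained(1)[of V E, OF assms(1,2)] by blast
  then show ?thesis using assms(3) card_image by metis
qed

lemma sum_lb:
  fixes a b m :: nat
  assumes "m * m \<le> a * b"
  shows "2 * m \<le> a + b"
proof (rule ccontr)
  assume "\<not> 2 * m \<le> a + b"
  then have "a + b < 2 * m" by simp
  then have "(a + b) ^ 2 < (2 * m) ^ 2" using power_strict_mono[of "a+b" "2*m" 2] by simp
  then have "(a + b) * (a + b) < (2 * m) * (2 * m)" by (simp add: power2_eq_square)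
  moreover have "4 * (a * b) \<le> (a + b) * (a + b)"
  proof -
    have "int (4 * (a * b)) \<le> int ((a + b) * (a + b))"
      using sum_squares_ge_zero[of "int a - int b" 0] by (simp add: algebra_simps power2_eq_square)
    then show ?thesis by linarith
  qed
  ultimately show False using assms by simp
qed


lemma soc_parity:
  assumes "strong_odd_coloring V E col" "v \<in> V" "nbhd V E v \<noteq> {}"
  shows "{x \<in> nbhd V E v. col x = c} = {} \<or> odd (card {x \<in> nbhd V E v. col x = c})"
  using assms unfolding strong_odd_coloring_def by blast

lemma rook_inj:
  fixes n m :: nat and p q :: "nat \<Rightarrow> nat" and R :: "nat \<Rightarrow> nat \<Rightarrow> bool"
  assumes surj: "\<forall>a<m. \<forall>b<m. \<exists>w<n. p w = a \<and> q w = b"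
    and rng: "\<forall>x<n. p x < m \<and> q x < m"
    and R: "\<forall>u v. R u v \<longleftrightarrow> (u < n \<and> v < n \<and> u \<noteq> v \<and> (p u = p v \<or> q u = q v))"
    and s: "strong_odd_coloring {..<n} R col"
    and uv: "u < n" "v < n" "u \<noteq> v" "col u = col v"
  shows False
proof -
  have proper: "\<And>x y. x < n \<Longrightarrow> y < n \<Longrightarrow> R x y \<Longrightarrow> col x \<noteq> col y"
    using s unfolding strong_odd_coloring_def by auto
  have npq: "p u \<noteq> p v" "q u \<noteq> q v" using proper[of u v] uv R by auto
  obtain w where w: "w < n" "p w = p u" "q w = q v" using surj rng uv by blast
  define A where "A = {x \<in> nbhd {..<n} R w. col x = col u}"
  have "A = {u, v}"
  proof
    show "A \<subseteq> {u, v}"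
    proof
      fix x assume "x \<in> A"
      then have x: "x < n" "R w x" "col x = col u" by (auto simp: A_def nbhd_def)
      then have "p x = p u \<or> q x = q v" using R w by auto
      then show "x \<in> {u, v}"
      proof
        assume "p x = p u"
        then have "x = u \<or> R x u" using R x uv by auto
        then show ?thesis using proper[of x u] x uv by auto
      next
        assume "q x = q v"
        then have "x = v \<or> R x v" using R x uv by auto
        then show ?thesis using proper[of x v] x uv by auto
      qed
    qed
  next
    have "R w u" "R w v" using R w uv npq by auto
    then show "{u, v} \<subseteq> A" using uv by (auto simp: A_def nbhd_def)
  qed
  then have "nbhd {..<n} R w \<noteq> {}" "A \<noteq> {}" "even (card A)" using uv by (auto simp: A_def)
  then show False using soc_parity[OF s, of w "col u"] w unfolding A_def by auto
qed

lemma rookc_inj: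
  fixes n m :: nat and p q :: "nat \<Rightarrow> nat" and R :: "nat \<Rightarrow> nat \<Rightarrow> bool"
  assumes surj: "\<forall>a<m. \<forall>b<m. \<exists>w<n. p w = a \<and> q w = b"
    and rng: "\<forall>x<n. p x < m \<and> q x < m"
    and inj: "\<forall>x<n. \<forall>y<n. p x = p y \<and> q x = q y \<longrightarrow> x = y"
    and om: "odd m"
    and R: "\<forall>u v. R u v \<longleftrightarrow> (u < n \<and> v < n \<and> u \<noteq> v \<and> (p u = p v \<or> q u = q v))"
    and s: "strong_odd_coloring {..<n} (graph_compl {..<n} R) col"
    and uv: "u < n" "v < n" "u \<noteq> v" "col u = col v" "p u = p v"
  shows False
proof -
  let ?T = "graph_compl {..<n} R"
  have T: "\<And>x y. ?T x y \<longleftrightarrow> x < n \<and> y < n \<and> x \<noteq> y \<and> p x \<noteq> p y \<and> q x \<noteq> q y"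
    using R by (auto simp: graph_compl_def)
  have proper: "\<And>x y. ?T x y \<Longrightarrow> col x \<noteq> col y"
    using s unfolding strong_odd_coloring_def by (auto simp: graph_compl_def)
  have quv: "q u \<noteq> q v" using inj uv by blast
  define S where "S = {x. x < n \<and> col x = col u}"
  have finS: "finite S" unfolding S_def by simp
  have Srow: "\<And>x. x \<in> S \<Longrightarrow> p x = p u"
  proof (rule ccontr)
    fix x assume x: "x \<in> S" "p x \<noteq> p u"
    then have "x < n" "col x = col u" by (auto simp: S_def)
    have "q x = q u" using proper[of x u] T[of x u] x \<open>x < n\<close> \<open>col x = col u\<close> uv by auto
    moreover have "q x = q v" using proper[of x v] T[of x v] x \<open>x < n\<close> \<open>col x = col u\<close> uv by auto
    ultimately show False using quv by simp
  qed
  have injS: "inj_on q S"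
    by (rule inj_onI) (use inj Srow in \<open>auto simp: S_def\<close>)
  have "m \<noteq> 1"
  proof
    assume "m = 1"
    then have "p u = 0" "p v = 0" "q u = 0" "q v = 0" using rng uv by auto
    then show False using quv by simp
  qed
  have pum: "p u < m" using rng uv by auto
  define a :: nat where "a = (if p u = 0 then 1 else 0)"
  have a: "a < m" "a \<noteq> p u" using pum \<open>m \<noteq> 1\<close> by (auto simp: a_def)
  have uS: "u \<in> S" "v \<in> S" using uv by (auto simp: S_def)
  have qS: "q ` S \<subseteq> {..<m}" using rng by (auto simp: S_def)
  have cardS: "card S \<le> m"
    using card_mono[OF _ qS] card_image[OF injS] by simp
  show False
  proof (cases "even (card S)")
    case True
    then have "card S \<noteq> m" using om by auto
    then have "card (q ` S) < m" using cardS card_image[OF injS] by simp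
    then have "\<not> {..<m} \<subseteq> q ` S" using card_mono[of "q ` S" "{..<m}"] finS by fastforce
    then obtain b where b: "b < m" "b \<notin> q ` S" by blast
    obtain w where w: "w < n" "p w = a" "q w = b" using surj a b by blast
    define A where "A = {x \<in> nbhd {..<n} ?T w. col x = col u}"
    have "A = S"
    proof
      show "A \<subseteq> S" by (auto simp: A_def S_def nbhd_def graph_compl_def)
      show "S \<subseteq> A"
      proof
        fix x assume x: "x \<in> S"
        then have "x < n" "col x = col u" "p x = p u" using Srow by (auto simp: S_def)
        moreover have "q x \<noteq> b" using x b by auto
        ultimately have "?T w x" using T w a by auto
        then show "x \<in> A" using \<open>x < n\<close> \<open>col x = col u\<close> by (auto simp: A_def nbhd_def)
      qed
    qed
    then have "nbhd {..<n} ?T w \<noteq> {}" "A \<noteq> {}" "even (card A)" using uS True by (auto simp: A_def)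
    then show False using soc_parity[OF s, of w "col u"] w unfolding A_def by auto
  next
    case False
    obtain w where w: "w < n" "p w = a" "q w = q u" using surj a rng uv by blast
    define A where "A = {x \<in> nbhd {..<n} ?T w. col x = col u}"
    have "A = S - {u}"
    proof
      show "A \<subseteq> S - {u}" using w by (auto simp: A_def S_def nbhd_def graph_compl_def R)
      show "S - {u} \<subseteq> A"
      proof
        fix x assume x: "x \<in> S - {u}"
        then have "x < n" "col x = col u" "p x = p u" using Srow by (auto simp: S_def)
        moreover have "q x \<noteq> q u" using x injS uS by (auto simp: inj_on_def)
        ultimately have "?T w x" using T w a by auto
        then show "x \<in> A" using \<open>x < n\<close> \<open>col x = col u\<close> by (auto simp: A_def nbhd_def)
      qed
    qed
    moreover have "card (S - {u}) = card S - 1" using uS finS by simp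
    moreover have "card S \<ge> 1" using uS finS card_0_eq by fastforce
    ultimately have "nbhd {..<n} ?T w \<noteq> {}" "A \<noteq> {}" "even (card A)" using uS False uv
      by (auto simp: A_def)
    then show False using soc_parity[OF s, of w "col u"] w unfolding A_def by auto
  qed
qed


lemma dm_facts:
  fixes m :: nat assumes "m > 0"
  shows "\<forall>x<m*m. x div m < m \<and> x mod m < m"
    and "\<forall>x<m*m. \<forall>y<m*m. x div m = y div m \<and> x mod m = y mod m \<longrightarrow> x = y"
    and "\<forall>a<m. \<forall>b<m. \<exists>w<m*m. w div m = a \<and> w mod m = b"
proof -
  show "\<forall>x<m*m. x div m < m \<and> x mod m < m"
    using assms by (simp add: less_mult_imp_div_less)
  show "\<forall>x<m*m. \<forall>y<m*m. x div m = y div m \<and> x mod m = y mod m \<longrightarrow> x = y"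
    by (metis div_mult_mod_eq)
  show "\<forall>a<m. \<forall>b<m. \<exists>w<m*m. w div m = a \<and> w mod m = b"
  proof (intro allI impI)
    fix a b assume ab: "a < m" "b < m"
    have "a * m + b < (a + 1) * m" using ab by simp
    also have "\<dots> \<le> m * m" using ab by (intro mult_le_mono1) simp
    finally have "a * m + b < m * m" .
    moreover have "(a * m + b) div m = a" "(a * m + b) mod m = b" using ab by auto
    ultimately show "\<exists>w<m*m. w div m = a \<and> w mod m = b" by blast
  qed
qed

definition rowE :: "nat \<Rightarrow> nat \<Rightarrow> nat \<Rightarrow> nat \<Rightarrow> bool" where
  "rowE m n u v = (u < n \<and> v < n \<and> u \<noteq> v \<and> u div m = v div m)"

definition rookE :: "nat \<Rightarrow> nat \<Rightarrow> nat \<Rightarrow> nat \<Rightarrow> bool" where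
  "rookE m n u v = (u < n \<and> v < n \<and> u \<noteq> v \<and> (u div m = v div m \<or> u mod m = v mod m))"

lemma rowE_simple: "simple_graph {..<n} (rowE m n)"
  by (auto simp: simple_graph_def rowE_def)

lemma rookE_simple: "simple_graph {..<n} (rookE m n)"
  by (auto simp: simple_graph_def rookE_def)

lemma card_row:
  fixes m c :: nat assumes "c < m"
  shows "card {u. u < m * m \<and> u div m = c} = m"
proof -
  have "{u. u < m * m \<and> u div m = c} = {c * m..<c * m + m}"
  proof (intro set_eqI iffI)
    fix u assume "u \<in> {u. u < m * m \<and> u div m = c}"
    then have "u div m = c" by simp
    then show "u \<in> {c * m..<c * m + m}"
      using assms div_times_less_eq_dividend[of u m] mod_less_divisor[of m u]
      by (metis atLeastLessThan_iff div_mult_mod_eq gr_implies_not_zero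
          nat_add_left_cancel_less not_gr_zero mult.commute)
  next
    fix u assume u: "u \<in> {c * m..<c * m + m}"
    then obtain r where r: "u = c * m + r" "r < m" by (metis add_less_cancel_left atLeastLessThan_iff le_Suc_ex)
    have "c * m + m \<le> m * m" using assms by (metis add.commute mult.commute mult_Suc_right Suc_leI mult_le_mono2)
    then show "u \<in> {u. u < m * m \<and> u div m = c}" using r by auto
  qed
  then show ?thesis by simp
qed

lemma rowE_soc: assumes "m > 0" shows "strong_odd_coloring {..<m*m} (rowE m (m*m)) (\<lambda>x. x mod m)"
  unfolding strong_odd_coloring_def
proof (intro conjI ballI impI allI)
  fix u v assume "u \<in> {..<m*m}" "v \<in> {..<m*m}" "rowE m (m*m) u v"
  then show "u mod m \<noteq> v mod m" using dm_facts(2)[OF assms] by (auto simp: rowE_def)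
next
  fix v c
  let ?B = "{u \<in> nbhd {..<m*m} (rowE m (m*m)) v. u mod m = c}"
  show "?B = {} \<or> odd (card ?B)"
  proof (cases "?B = {}")
    case False
    then obtain x where x: "x \<in> ?B" by blast
    have "?B = {x}"
      using x dm_facts(2)[OF assms] by (auto simp: nbhd_def rowE_def)
    then show ?thesis by simp
  qed simp
qed

lemma rowEc_soc: assumes "m > 0" "odd m"
  shows "strong_odd_coloring {..<m*m} (graph_compl {..<m*m} (rowE m (m*m))) (\<lambda>x. x div m)"
  unfolding strong_odd_coloring_def
proof (intro conjI ballI impI allI)
  fix u v assume "graph_compl {..<m*m} (rowE m (m*m)) u v"
  then show "u div m \<noteq> v div m" by (auto simp: rowE_def graph_compl_def)
next
  fix v c
  assume v: "v \<in> {..<m*m}" "nbhd {..<m*m} (graph_compl {..<m*m} (rowE m (m*m))) v \<noteq> {}"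
  let ?B = "{u \<in> nbhd {..<m*m} (graph_compl {..<m*m} (rowE m (m*m))) v. u div m = c}"
  show "?B = {} \<or> odd (card ?B)"
  proof (cases "c = v div m \<or> c \<ge> m")
    case True
    then have "?B = {}" using dm_facts(1)[OF assms(1)]
      by (auto simp: nbhd_def rowE_def graph_compl_def)
    then show ?thesis by simp
  next
    case False
    then have "?B = {u. u < m * m \<and> u div m = c}" using v
      by (auto simp: nbhd_def rowE_def graph_compl_def)
    then show ?thesis using card_row[of c m] False assms by simp
  qed
qed


lemma rook_chi:
  fixes m :: nat assumes "m > 0" "odd m"
  shows "chi_so {..<m*m} (rookE m (m*m)) = m*m"
    and "chi_so {..<m*m} (graph_compl {..<m*m} (rookE m (m*m))) = m*m"
proof -
  let ?n = "m*m"
  note f = dm_facts[OF assms(1)]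
  have Rc: "\<forall>u v. rookE m ?n u v \<longleftrightarrow> (u < ?n \<and> v < ?n \<and> u \<noteq> v \<and> (u div m = v div m \<or> u mod m = v mod m))"
    by (simp add: rookE_def)
  have Rc': "\<forall>u v. rookE m ?n u v \<longleftrightarrow> (u < ?n \<and> v < ?n \<and> u \<noteq> v \<and> (u mod m = v mod m \<or> u div m = v div m))"
    by (auto simp: rookE_def)
  have f1': "\<forall>x<m*m. x mod m < m \<and> x div m < m" using f(1) by blast
  have f2': "\<forall>x<m*m. \<forall>y<m*m. x mod m = y mod m \<and> x div m = y div m \<longrightarrow> x = y" using f(2) by blast
  have f3': "\<forall>a<m. \<forall>b<m. \<exists>w<m*m. w mod m = a \<and> w div m = b" using f(3) by blast
  have irr: "\<forall>v. \<not> rookE m ?n v v" by (simp add: rookE_def)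
  show "chi_so {..<m*m} (rookE m (m*m)) = m*m"
  proof -
    have "\<forall>col. strong_odd_coloring {..<?n} (rookE m ?n) col \<longrightarrow> inj_on col {..<?n}"
    proof (intro allI impI inj_onI)
      fix col u v assume s: "strong_odd_coloring {..<?n} (rookE m ?n) col"
        and uv: "u \<in> {..<?n}" "v \<in> {..<?n}" "col u = col v"
      show "u = v"
      proof (rule ccontr)
        assume "u \<noteq> v"
        then show False using rook_inj[OF f(3) f(1) Rc s, of u v] uv by auto
      qed
    qed
    then show ?thesis using chi_so_inj[of "{..<?n}" "rookE m ?n"] irr by simp
  qed
  show "chi_so {..<m*m} (graph_compl {..<m*m} (rookE m (m*m))) = m*m"
  proof -
    have "\<forall>col. strong_odd_coloring {..<?n} (graph_compl {..<?n} (rookE m ?n)) col \<longrightarrow> inj_on col {..<?n}"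
    proof (intro allI impI inj_onI)
      fix col u v assume s: "strong_odd_coloring {..<?n} (graph_compl {..<?n} (rookE m ?n)) col"
        and uv: "u \<in> {..<?n}" "v \<in> {..<?n}" "col u = col v"
      show "u = v"
      proof (rule ccontr)
        assume ne: "u \<noteq> v"
        have "\<not> graph_compl {..<?n} (rookE m ?n) u v"
          using s uv unfolding strong_odd_coloring_def by auto
        then have "u div m = v div m \<or> u mod m = v mod m" using uv ne
          by (auto simp: graph_compl_def rookE_def)
        then show False
        proof
          assume "u div m = v div m"
          then show False using rookc_inj[OF f(3) f(1) f(2) assms(2) Rc s, of u v] uv ne by auto
        next
          assume "u mod m = v mod m"
          then show False using rookc_inj[OF f3' f1' f2' assms(2) Rc' s, of u v] uv ne by auto
        qed
      qed
    qed
    then show ?thesis using chi_so_inj[of "{..<?n}" "graph_compl {..<?n} (rookE m ?n)"] compl_irrefl[of "{..<?n}" "rookE m ?n"] by simp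
  qed
qed

lemma row_chi:
  fixes m :: nat assumes "m > 0" "odd m"
  shows "chi_so {..<m*m} (rowE m (m*m)) = m"
    and "chi_so {..<m*m} (graph_compl {..<m*m} (rowE m (m*m))) = m"
proof -
  let ?n = "m*m"
  have irr: "\<forall>v. \<not> rowE m ?n v v" by (simp add: rowE_def)
  have "(\<lambda>x. x mod m) ` {..<?n} \<subseteq> {..<m}" using dm_facts(1)[OF assms(1)] by auto
  then have "card ((\<lambda>x. x mod m) ` {..<?n}) \<le> m" using card_mono[of "{..<m}"] by fastforce
  then have a: "chi_so {..<?n} (rowE m ?n) \<le> m" using chi_so_le[OF rowE_soc[OF assms(1)]] by linarith
  have "(\<lambda>x. x div m) ` {..<?n} \<subseteq> {..<m}" using dm_facts(1)[OF assms(1)] by auto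
  then have "card ((\<lambda>x. x div m) ` {..<?n}) \<le> m" using card_mono[of "{..<m}"] by fastforce
  then have b: "chi_so {..<?n} (graph_compl {..<?n} (rowE m ?n)) \<le> m"
    using chi_so_le[OF rowEc_soc[OF assms]] by linarith
  have p: "m * m \<le> chi_so {..<?n} (rowE m ?n) * chi_so {..<?n} (graph_compl {..<?n} (rowE m ?n))"
    using product_lb[of "{..<?n}" "rowE m ?n"] irr by simp
  show "chi_so {..<m*m} (rowE m (m*m)) = m"
  proof (rule ccontr)
    assume "chi_so {..<m*m} (rowE m (m*m)) \<noteq> m"
    then have "chi_so {..<m*m} (rowE m (m*m)) < m" using a by simp
    then have "chi_so {..<?n} (rowE m ?n) * chi_so {..<?n} (graph_compl {..<?n} (rowE m ?n)) < m * m"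
      using b by (meson le_less_trans mult_le_mono2 mult_less_mono1 assms(1))
    then show False using p by simp
  qed
  show "chi_so {..<m*m} (graph_compl {..<m*m} (rowE m (m*m))) = m"
  proof (rule ccontr)
    assume "chi_so {..<m*m} (graph_compl {..<m*m} (rowE m (m*m))) \<noteq> m"
    then have "chi_so {..<m*m} (graph_compl {..<m*m} (rowE m (m*m))) < m" using b by simp
    then have "chi_so {..<?n} (rowE m ?n) * chi_so {..<?n} (graph_compl {..<?n} (rowE m ?n)) < m * m"
      using a by (meson le_less_trans mult_le_mono1 mult_less_mono2 assms(1))
    then show False using p by simp
  qed
qed

theorem theorem4p6:
  fixes k n :: nat
  assumes "n = (2 * k + 1) ^ 2"
  shows
    "(\<exists>E :: nat \<Rightarrow> nat \<Rightarrow> bool. simple_graph {..<n} E \<and>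
        chi_so {..<n} E = 2 * k + 1 \<and> chi_so {..<n} (graph_compl {..<n} E) = 2 * k + 1)
   \<and> (\<exists>E :: nat \<Rightarrow> nat \<Rightarrow> bool. simple_graph {..<n} E \<and>
        chi_so {..<n} E = n \<and> chi_so {..<n} (graph_compl {..<n} E) = n)
   \<and> (\<forall>(V :: 'a set) E. simple_graph V E \<and> card V = n \<longrightarrow>
        2 * (2 * k + 1) \<le> chi_so V E + chi_so V (graph_compl V E) \<and>
        chi_so V E + chi_so V (graph_compl V E) \<le> 2 * n \<and>
        n \<le> chi_so V E * chi_so V (graph_compl V E) \<and>
        chi_so V E * chi_so V (graph_compl V E) \<le> n ^ 2)
   \<and> (\<exists>E :: nat \<Rightarrow> nat \<Rightarrow> bool. simple_graph {..<n} E \<and>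
        chi_so {..<n} E + chi_so {..<n} (graph_compl {..<n} E) = 2 * (2 * k + 1))
   \<and> (\<exists>E :: nat \<Rightarrow> nat \<Rightarrow> bool. simple_graph {..<n} E \<and>
        chi_so {..<n} E + chi_so {..<n} (graph_compl {..<n} E) = 2 * n)
   \<and> (\<exists>E :: nat \<Rightarrow> nat \<Rightarrow> bool. simple_graph {..<n} E \<and>
        chi_so {..<n} E * chi_so {..<n} (graph_compl {..<n} E) = n)
   \<and> (\<exists>E :: nat \<Rightarrow> nat \<Rightarrow> bool. simple_graph {..<n} E \<and>
        chi_so {..<n} E * chi_so {..<n} (graph_compl {..<n} E) = n ^ 2)"
proof -
  define m where "m = 2 * k + 1"
  have m: "m > 0" "odd m" by (auto simp: m_def)
  have n: "n = m * m" using assms by (simp add: m_def power2_eq_square)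
  have H1: "simple_graph {..<n} (rowE m n) \<and> chi_so {..<n} (rowE m n) = m
      \<and> chi_so {..<n} (graph_compl {..<n} (rowE m n)) = m"
    using row_chi[OF m] rowE_simple n by simp
  have H2: "simple_graph {..<n} (rookE m n) \<and> chi_so {..<n} (rookE m n) = n
      \<and> chi_so {..<n} (graph_compl {..<n} (rookE m n)) = n"
    using rook_chi[OF m] rookE_simple n by simp
  have G: "\<forall>(V :: 'a set) E. simple_graph V E \<and> card V = n \<longrightarrow>
        2 * m \<le> chi_so V E + chi_so V (graph_compl V E) \<and>
        chi_so V E + chi_so V (graph_compl V E) \<le> 2 * n \<and>
        n \<le> chi_so V E * chi_so V (graph_compl V E) \<and>
        chi_so V E * chi_so V (graph_compl V E) \<le> n ^ 2"
  proof (intro allI impI)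
    fix V :: "'a set" and E assume VE: "simple_graph V E \<and> card V = n"
    then have fin: "finite V" and irr: "\<forall>v. \<not> E v v" and cV: "card V = n"
      by (auto simp: simple_graph_def)
    have p: "n \<le> chi_so V E * chi_so V (graph_compl V E)"
      using product_lb[of V E, OF fin irr] cV by simp
    have a: "chi_so V E \<le> n" using chi_so_attained(2)[of V E, OF fin irr] cV by simp
    have b: "chi_so V (graph_compl V E) \<le> n"
      using chi_so_attained(2)[of V "graph_compl V E", OF fin compl_irrefl] cV by simp
    have "2 * m \<le> chi_so V E + chi_so V (graph_compl V E)"
      using sum_lb[of m] p n by simp
    moreover have "chi_so V E * chi_so V (graph_compl V E) \<le> n ^ 2"
      using mult_le_mono[OF a b] by (simp add: power2_eq_square)
    ultimately show "2 * m \<le> chi_so V E + chi_so V (graph_compl V E) \<and>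
        chi_so V E + chi_so V (graph_compl V E) \<le> 2 * n \<and>
        n \<le> chi_so V E * chi_so V (graph_compl V E) \<and>
        chi_so V E * chi_so V (graph_compl V E) \<le> n ^ 2" using a b p by simp
  qed
  show ?thesis
    unfolding m_def[symmetric]
    apply (intro conjI)
    using H1 apply blast
    using H2 apply blast
    using G apply blast
    using H1 apply (metis mult_2)
    using H2 apply (metis mult_2)
    using H1 n apply metis
    using H2 apply (metis power2_eq_square)
    done
qed

end
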